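(* Let $s=\tfrac12$, $\lambda\in\mathbb{C}$ and $k\in\mathbb{Z}$. Every odd superderivation of $\mathfrak{L}^{1/2}_\lambda$ of degree $k+\tfrac12$ is inner; more precisely, it equals $\mathrm{ad}(aG_{k+1/2}+bH_{k+1/2})$ for some $a,b\in\mathbb{C}$.
   Context: For $s\in\{0,\tfrac12\}$ and $\lambda\in\mathbb{C}$, $\mathfrak{L}^s_\lambda$ is the complex Lie superalgebra with basis $\{L_m,I_m,G_p,H_p : m\in\mathbb{Z},\ p\in s+\mathbb{Z}\}$, even part spanned by the $L_m,I_m$, odd part spanned by the $G_p,H_p$, and brackets $[L_m,L_n]=(m-n)L_{m+n}$, $[L_m,I_n]=(m-n)I_{m+n}$, $[L_m,H_p]=(\tfrac m2-p)H_{m+p}$, $[L_m,G_p]=(\tfrac m2-p)G_{m+p}+\lambda(m+1)H_{m+p}$, $[I_m,G_p]=(m-2p)H_{m+p}$, $[G_p,G_q]=I_{p+q}$, plus those given by super-antisymmetry $[y,x]=-(-1)^{|x||y|}[x,y]$; all other brackets of basis elements are zero. $\mathfrak{L}_r$ ($r\in\tfrac12\mathbb{Z}$) is spanned by basis elements of index $r$. A superderivation of parity $a$ is a linear map $D$ shifting parity by $a$ with $D([x,y])=[D(x),y]+(-1)^{a|x|}[x,D(y)]$ for homogeneous $x,y$; it has degree $r$ if $D(\mathfrak{L}_q)\subset\mathfrak{L}_{q+r}$. $\mathrm{ad}\,x(y)=[x,y]$. *)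

theory Defs
  imports Complex_Main "HOL-Library.Function_Algebras"
begin

text \<open>Basis elements: L m, I m (even, m :: int),
  G j, H j (odd) where G j stands for G_{j+1/2} and H j for H_{j+1/2}.
  Elements of the algebra are finitely supported coefficient functions bas => complex.\<close>

datatype bas = L int | I int | G int | H int

definition sc :: "complex \<Rightarrow> (bas \<Rightarrow> complex) \<Rightarrow> bas \<Rightarrow> complex" (infixr "\<cdot>" 75) where
  "c \<cdot> x = (\<lambda>b. c * x b)"

definition supp :: "(bas \<Rightarrow> complex) \<Rightarrow> bas set" where
  "supp x = {b. x b \<noteq> 0}"

definition Lspace :: "(bas \<Rightarrow> complex) set" where
  "Lspace = {x. finite (supp x)}"

definition e :: "bas \<Rightarrow> bas \<Rightarrow> complex" where
  "e b = (\<lambda>c. if c = b then 1 else 0)"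

fun odd_bas :: "bas \<Rightarrow> bool" where
  "odd_bas (L m) = False"
| "odd_bas (I m) = False"
| "odd_bas (G j) = True"
| "odd_bas (H j) = True"

fun deg :: "bas \<Rightarrow> real" where
  "deg (L m) = of_int m"
| "deg (I m) = of_int m"
| "deg (G j) = of_int j + 1/2"
| "deg (H j) = of_int j + 1/2"

text \<open>Half-integer p = j + 1/2, so e.g. m/2 - p = m/2 - j - 1/2 and m - 2p = m - 2j - 1,
  G_p + G_q indices: p + q = j + k + 1.\<close>
fun brb :: "complex \<Rightarrow> bas \<Rightarrow> bas \<Rightarrow> bas \<Rightarrow> complex" where
  "brb lam (L m) (L n) = (of_int (m - n) :: complex) \<cdot> e (L (m + n))"
| "brb lam (L m) (I n) = (of_int (m - n) :: complex) \<cdot> e (I (m + n))"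
| "brb lam (I n) (L m) = - ((of_int (m - n) :: complex) \<cdot> e (I (m + n)))"
| "brb lam (L m) (H j) = (of_int m / 2 - of_int j - 1/2 :: complex) \<cdot> e (H (m + j))"
| "brb lam (H j) (L m) = - ((of_int m / 2 - of_int j - 1/2 :: complex) \<cdot> e (H (m + j)))"
| "brb lam (L m) (G j) = (of_int m / 2 - of_int j - 1/2 :: complex) \<cdot> e (G (m + j))
                          + (lam * of_int (m + 1)) \<cdot> e (H (m + j))"
| "brb lam (G j) (L m) = - ((of_int m / 2 - of_int j - 1/2 :: complex) \<cdot> e (G (m + j))
                          + (lam * of_int (m + 1)) \<cdot> e (H (m + j)))"
| "brb lam (I m) (G j) = (of_int (m - 2 * j - 1) :: complex) \<cdot> e (H (m + j))"
| "brb lam (G j) (I m) = - ((of_int (m - 2 * j - 1) :: complex) \<cdot> e (H (m + j)))"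
| "brb lam (G j) (G k) = e (I (j + k + 1))"
| "brb lam _ _ = 0"

definition brk :: "complex \<Rightarrow> (bas \<Rightarrow> complex) \<Rightarrow> (bas \<Rightarrow> complex) \<Rightarrow> bas \<Rightarrow> complex" where
  "brk lam x y = (\<Sum>a\<in>supp x. \<Sum>b\<in>supp y. (x a * y b) \<cdot> brb lam a b)"

definition homog :: "bool \<Rightarrow> (bas \<Rightarrow> complex) \<Rightarrow> bool" where
  "homog par x \<longleftrightarrow> x \<in> Lspace \<and> (\<forall>b\<in>supp x. odd_bas b = par)"

definition graded :: "real \<Rightarrow> (bas \<Rightarrow> complex) \<Rightarrow> bool" where
  "graded q x \<longleftrightarrow> x \<in> Lspace \<and> (\<forall>b\<in>supp x. deg b = q)"

text \<open>Odd superderivation of L^{1/2}_lambda (parity a = 1, so the sign is (-1)^{|x|}).\<close>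
definition odd_superder :: "complex \<Rightarrow> ((bas \<Rightarrow> complex) \<Rightarrow> (bas \<Rightarrow> complex)) \<Rightarrow> bool" where
  "odd_superder lam D \<longleftrightarrow>
     (\<forall>x\<in>Lspace. D x \<in> Lspace) \<and>
     (\<forall>x\<in>Lspace. \<forall>y\<in>Lspace. D (x + y) = D x + D y) \<and>
     (\<forall>c. \<forall>x\<in>Lspace. D (c \<cdot> x) = c \<cdot> D x) \<and>
     (\<forall>par x. homog par x \<longrightarrow> homog (\<not> par) (D x)) \<and>
     (\<forall>px py x y. homog px x \<longrightarrow> homog py y \<longrightarrow>
        D (brk lam x y) = brk lam (D x) y + (if px then -1 else 1) \<cdot> brk lam x (D y))"

definition has_degree :: "real \<Rightarrow> ((bas \<Rightarrow> complex) \<Rightarrow> (bas \<Rightarrow> complex)) \<Rightarrow> bool" where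
  "has_degree r D \<longleftrightarrow> (\<forall>q x. graded q x \<longrightarrow> graded (q + r) (D x))"

end

theory Submission
  imports Defs
begin

lemma sum_fun_apply: "(\<Sum>c\<in>S. f c) d = (\<Sum>c\<in>S. f c d)"
  for f :: "'a \<Rightarrow> bas \<Rightarrow> complex"
  by (induct S rule: infinite_finite_induct) auto

lemma sc_apply[simp]: "(c \<cdot> x) d = c * x d" by (simp add: sc_def)

lemma sc_one[simp]: "1 \<cdot> x = x" by (simp add: sc_def)

lemma e_apply[simp]: "e b d = (if d = b then 1 else 0)" by (simp add: e_def)

lemma supp_e[simp]: "supp (e b) = {b}" by (auto simp: supp_def)

lemma e_Lspace[simp]: "e b \<in> Lspace" by (simp add: Lspace_def)

lemma supp_add: "supp (x + y) \<subseteq> supp x \<union> supp y" by (auto simp: supp_def)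
lemma supp_sc: "supp (c \<cdot> x) \<subseteq> supp x" by (auto simp: supp_def)

lemma Lspace_add[simp]: "x \<in> Lspace \<Longrightarrow> y \<in> Lspace \<Longrightarrow> x + y \<in> Lspace"
  unfolding Lspace_def using supp_add[of x y] by (auto intro: finite_subset)

lemma Lspace_sc[simp]: "x \<in> Lspace \<Longrightarrow> c \<cdot> x \<in> Lspace"
  unfolding Lspace_def using supp_sc[of c x] by (auto intro: finite_subset)

lemma Lspace_zero[simp]: "0 \<in> Lspace" by (simp add: Lspace_def supp_def)

lemma brk_gen:
  assumes "finite A" "supp x \<subseteq> A" "finite B" "supp y \<subseteq> B"
  shows "brk lam x y d = (\<Sum>a\<in>A. \<Sum>b\<in>B. x a * y b * brb lam a b d)"
proof -
  have "brk lam x y d = (\<Sum>a\<in>supp x. \<Sum>b\<in>supp y. x a * y b * brb lam a b d)"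
    unfolding brk_def by (simp add: sum_fun_apply)
  also have "\<dots> = (\<Sum>a\<in>A. \<Sum>b\<in>supp y. x a * y b * brb lam a b d)"
    by (rule sum.mono_neutral_left) (use assms in \<open>auto simp: supp_def\<close>)
  also have "\<dots> = (\<Sum>a\<in>A. \<Sum>b\<in>B. x a * y b * brb lam a b d)"
    by (rule sum.cong[OF refl], rule sum.mono_neutral_left) (use assms in \<open>auto simp: supp_def\<close>)
  finally show ?thesis .
qed


lemma brk_add_left:
  assumes "x \<in> Lspace" "y \<in> Lspace" "z \<in> Lspace"
  shows "brk lam (x + y) z = brk lam x z + brk lam y z"
proof
  fix d
  let ?A = "supp x \<union> supp y"
  have f: "finite ?A" "finite (supp z)" using assms by (auto simp: Lspace_def)
  show "brk lam (x + y) z d = (brk lam x z + brk lam y z) d"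
    using brk_gen[OF f(1) supp_add f(2) order_refl, where lam=lam and d=d]
      brk_gen[OF f(1) _ f(2) order_refl, where x=x and lam=lam and d=d]
      brk_gen[OF f(1) _ f(2) order_refl, where x=y and lam=lam and d=d]
    by (simp add: sum.distrib[symmetric] algebra_simps)
qed

lemma brk_add_right:
  assumes "x \<in> Lspace" "y \<in> Lspace" "z \<in> Lspace"
  shows "brk lam z (x + y) = brk lam z x + brk lam z y"
proof
  fix d
  let ?A = "supp x \<union> supp y"
  have f: "finite ?A" "finite (supp z)" using assms by (auto simp: Lspace_def)
  show "brk lam z (x + y) d = (brk lam z x + brk lam z y) d"
    using brk_gen[OF f(2) order_refl f(1) supp_add, where lam=lam and d=d]
      brk_gen[OF f(2) order_refl f(1), where y=x and lam=lam and d=d]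
      brk_gen[OF f(2) order_refl f(1), where y=y and lam=lam and d=d]
    by (simp add: sum.distrib[symmetric] algebra_simps)
qed

lemma brk_sc_left:
  assumes "x \<in> Lspace" "z \<in> Lspace"
  shows "brk lam (c \<cdot> x) z = c \<cdot> brk lam x z"
proof
  fix d
  have f: "finite (supp x)" "finite (supp z)" using assms by (auto simp: Lspace_def)
  show "brk lam (c \<cdot> x) z d = (c \<cdot> brk lam x z) d"
    using brk_gen[OF f(1) supp_sc f(2) order_refl, where lam=lam and d=d]
      brk_gen[OF f(1) order_refl f(2) order_refl, where lam=lam and d=d]
    by (simp add: sum_distrib_left algebra_simps)
qed

lemma brk_sc_right:
  assumes "x \<in> Lspace" "z \<in> Lspace"
  shows "brk lam z (c \<cdot> x) = c \<cdot> brk lam z x"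
proof
  fix d
  have f: "finite (supp x)" "finite (supp z)" using assms by (auto simp: Lspace_def)
  show "brk lam z (c \<cdot> x) d = (c \<cdot> brk lam z x) d"
    using brk_gen[OF f(2) order_refl f(1) supp_sc, where lam=lam and d=d]
      brk_gen[OF f(2) order_refl f(1) order_refl, where lam=lam and d=d]
    by (simp add: sum_distrib_left algebra_simps)
qed

lemma brk_e_e[simp]: "brk lam (e a) (e b) = brb lam a b"
  by (rule ext) (simp add: brk_gen[of "{a}" _ "{b}"])

lemma plus_fun_apply'[simp]: "(f + g) d = f d + (g d :: complex)" by simp
lemma zero_fun_apply'[simp]: "(0 :: bas \<Rightarrow> complex) d = 0" by simp

lemma half_neq: "of_int j + 1/2 \<noteq> (of_int n :: real)"
proof
  assume "of_int j + 1/2 = (of_int n :: real)"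
  then have "(of_int (2*j+1) :: real) = of_int (2*n)" by simp
  then have "2*j+1 = 2*n" by (simp only: of_int_eq_iff)
  then show False by presburger
qed

lemma half_neq': "(of_int n :: real) \<noteq> of_int j + 1/2" using half_neq[of j n] by metis

lemma half_eq: "(of_int j + 1/2 = (of_int n + 1/2 :: real)) = (j = n)" by simp

lemma graded_int:
  assumes "graded (of_int n) x"
  shows "x = x (L n) \<cdot> e (L n) + x (I n) \<cdot> e (I n)"
proof
  fix d
  show "x d = (x (L n) \<cdot> e (L n) + x (I n) \<cdot> e (I n)) d"
  proof (cases "x d = 0")
    case True then show ?thesis by (cases d) auto
  next
    case False
    then have "deg d = of_int n" using assms by (auto simp: graded_def supp_def)
    then show ?thesis by (cases d) (auto simp: half_neq)
  qed
qed

lemma graded_half: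
  assumes "graded (of_int n + 1/2) x"
  shows "x = x (G n) \<cdot> e (G n) + x (H n) \<cdot> e (H n)"
proof
  fix d
  show "x d = (x (G n) \<cdot> e (G n) + x (H n) \<cdot> e (H n)) d"
  proof (cases "x d = 0")
    case True then show ?thesis by (cases d) auto
  next
    case False
    then have "deg d = of_int n + 1/2" using assms by (auto simp: graded_def supp_def)
    then show ?thesis using half_neq[of n] by (cases d) (auto simp: half_neq half_neq')
  qed
qed

lemma graded_e: "graded (deg b) (e b)" by (simp add: graded_def)

lemma deg_int:
  assumes "has_degree (of_int k + 1/2) D"
  shows "D (e (L m)) = D (e (L m)) (G (m+k)) \<cdot> e (G (m+k)) + D (e (L m)) (H (m+k)) \<cdot> e (H (m+k))"
    and "D (e (I m)) = D (e (I m)) (G (m+k)) \<cdot> e (G (m+k)) + D (e (I m)) (H (m+k)) \<cdot> e (H (m+k))"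
proof -
  have "graded (of_int m + (of_int k + 1/2)) (D (e (L m)))"
    using assms graded_e[of "L m"] by (auto simp: has_degree_def)
  then show "D (e (L m)) = D (e (L m)) (G (m+k)) \<cdot> e (G (m+k)) + D (e (L m)) (H (m+k)) \<cdot> e (H (m+k))"
    by (intro graded_half) (simp add: add.assoc)
  have "graded (of_int m + (of_int k + 1/2)) (D (e (I m)))"
    using assms graded_e[of "I m"] by (auto simp: has_degree_def)
  then show "D (e (I m)) = D (e (I m)) (G (m+k)) \<cdot> e (G (m+k)) + D (e (I m)) (H (m+k)) \<cdot> e (H (m+k))"
    by (intro graded_half) (simp add: add.assoc)
qed

lemma deg_half:
  assumes "has_degree (of_int k + 1/2) D"
  shows "D (e (G j)) = D (e (G j)) (L (j+k+1)) \<cdot> e (L (j+k+1)) + D (e (G j)) (I (j+k+1)) \<cdot> e (I (j+k+1))"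
    and "D (e (H j)) = D (e (H j)) (L (j+k+1)) \<cdot> e (L (j+k+1)) + D (e (H j)) (I (j+k+1)) \<cdot> e (I (j+k+1))"
proof -
  have "graded (of_int j + 1/2 + (of_int k + 1/2)) (D (e (G j)))"
    using assms graded_e[of "G j"] unfolding has_degree_def deg.simps by blast
  moreover have "of_int j + 1/2 + (of_int k + 1/2) = (of_int (j+k+1)::real)" by simp
  ultimately have "graded (of_int (j+k+1)) (D (e (G j)))" by metis
  then show "D (e (G j)) = D (e (G j)) (L (j+k+1)) \<cdot> e (L (j+k+1)) + D (e (G j)) (I (j+k+1)) \<cdot> e (I (j+k+1))"
    by (rule graded_int)
  have "graded (of_int j + 1/2 + (of_int k + 1/2)) (D (e (H j)))"
    using assms graded_e[of "H j"] unfolding has_degree_def deg.simps by blast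
  moreover have "of_int j + 1/2 + (of_int k + 1/2) = (of_int (j+k+1)::real)" by simp
  ultimately have "graded (of_int (j+k+1)) (D (e (H j)))" by metis
  then show "D (e (H j)) = D (e (H j)) (L (j+k+1)) \<cdot> e (L (j+k+1)) + D (e (H j)) (I (j+k+1)) \<cdot> e (I (j+k+1))"
    by (rule graded_int)
qed

lemma homog_e: "homog (odd_bas b) (e b)" by (simp add: homog_def)

context
  fixes lam D
  assumes osd: "odd_superder lam D"
begin

lemma D_Lspace[simp]: "x \<in> Lspace \<Longrightarrow> D x \<in> Lspace" using osd by (simp add: odd_superder_def)
lemma D_add[simp]: "x \<in> Lspace \<Longrightarrow> y \<in> Lspace \<Longrightarrow> D (x + y) = D x + D y"
  using osd by (simp add: odd_superder_def)
lemma D_sc[simp]: "x \<in> Lspace \<Longrightarrow> D (c \<cdot> x) = c \<cdot> D x"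
  using osd by (simp add: odd_superder_def)

lemma der_basis: "D (brb lam a b) = brk lam (D (e a)) (e b) + (if odd_bas a then -1 else 1) \<cdot> brk lam (e a) (D (e b))"
proof -
  have "D (brk lam (e a) (e b)) = brk lam (D (e a)) (e b) + (if odd_bas a then -1 else 1) \<cdot> brk lam (e a) (D (e b))"
    using osd homog_e[of a] homog_e[of b] unfolding odd_superder_def by blast
  then show ?thesis by simp
qed

end

lemma sc_zero_left[simp]: "(0::complex) \<cdot> x = 0" by (rule ext) simp

lemma sum_e_Lspace: "finite S \<Longrightarrow> (\<Sum>c\<in>S. g c \<cdot> e c) \<in> Lspace"
proof (induct S rule: finite_induct)
  case empty show ?case by (simp only: sum.empty Lspace_zero)
next
  case (insert c S) show ?case
    unfolding sum.insert[OF insert(1,2)] by (rule Lspace_add[OF Lspace_sc[OF e_Lspace] insert(3)])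
qed

lemma lin_sum:
  assumes add: "\<And>x y. x \<in> Lspace \<Longrightarrow> y \<in> Lspace \<Longrightarrow> F (x + y) = F x + F y"
    and sc: "\<And>c x. x \<in> Lspace \<Longrightarrow> F (c \<cdot> x) = c \<cdot> F x"
    and fin: "finite S"
  shows "F (\<Sum>c\<in>S. g c \<cdot> e c) = (\<Sum>c\<in>S. g c \<cdot> F (e c))"
  using fin
proof (induct S rule: finite_induct)
  case empty
  have "F 0 = F (0 \<cdot> 0)" by (simp only: sc_zero_left)
  also have "\<dots> = 0" using sc[OF Lspace_zero, of 0] by (simp only: sc_zero_left)
  finally show ?case by (simp only: sum.empty)
next
  case (insert c S)
  have "F (\<Sum>c\<in>insert c S. g c \<cdot> e c) = F (g c \<cdot> e c + (\<Sum>c\<in>S. g c \<cdot> e c))"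
    unfolding sum.insert[OF insert(1,2)] ..
  also have "\<dots> = g c \<cdot> F (e c) + F (\<Sum>c\<in>S. g c \<cdot> e c)"
    by (simp only: add[OF Lspace_sc[OF e_Lspace] sum_e_Lspace[OF insert(1)]] sc[OF e_Lspace])
  also have "\<dots> = (\<Sum>c\<in>insert c S. g c \<cdot> F (e c))"
    unfolding sum.insert[OF insert(1,2)] insert(3) ..
  finally show ?case .
qed

lemma repr: "x \<in> Lspace \<Longrightarrow> x = (\<Sum>c\<in>supp x. x c \<cdot> e c)"
proof (rule ext)
  fix d assume "x \<in> Lspace"
  then have f: "finite (supp x)" by (simp add: Lspace_def)
  have "(\<Sum>c\<in>supp x. x c \<cdot> e c) d = (\<Sum>c\<in>supp x. if d = c then x c else 0)"
    by (simp add: sum_fun_apply if_distrib cong: if_cong)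
  also have "\<dots> = x d" using f by (simp add: supp_def)
  finally show "x d = (\<Sum>c\<in>supp x. x c \<cdot> e c) d" by simp
qed

lemma r_nz: "(of_int k + 1/2 :: complex) \<noteq> 0"
proof
  assume "(of_int k + 1/2 :: complex) = 0"
  then have "(of_int (2*k+1) :: complex) = of_int 0" by (simp add: field_simps)
  then have "2*k+1 = 0" by (simp only: of_int_eq_iff)
  then show False by presburger
qed

theorem lemma2p8:
  fixes lam :: complex and k :: int
    and D :: "(bas \<Rightarrow> complex) \<Rightarrow> (bas \<Rightarrow> complex)"
  assumes "odd_superder lam D"
    and "has_degree (of_int k + 1/2) D"
  shows "\<exists>a b :: complex. \<forall>x\<in>Lspace.
           D x = brk lam (a \<cdot> e (G k) + b \<cdot> e (H k)) x"
proof -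
  note osd = assms(1) and hd = assms(2)
  define \<alpha> where "\<alpha> m = D (e (L m)) (G (m+k))" for m
  define \<beta> where "\<beta> m = D (e (L m)) (H (m+k))" for m
  define \<gamma> where "\<gamma> m = D (e (I m)) (G (m+k))" for m
  define \<delta> where "\<delta> m = D (e (I m)) (H (m+k))" for m
  define \<epsilon> where "\<epsilon> j = D (e (G j)) (L (j+k+1))" for j
  define \<zeta> where "\<zeta> j = D (e (G j)) (I (j+k+1))" for j
  define \<eta> where "\<eta> j = D (e (H j)) (L (j+k+1))" for j
  define \<theta> where "\<theta> j = D (e (H j)) (I (j+k+1))" for j
  have DL: "D (e (L m)) = \<alpha> m \<cdot> e (G (m+k)) + \<beta> m \<cdot> e (H (m+k))" for m
    unfolding \<alpha>_def \<beta>_def by (rule deg_int(1)[OF hd])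
  have DI: "D (e (I m)) = \<gamma> m \<cdot> e (G (m+k)) + \<delta> m \<cdot> e (H (m+k))" for m
    unfolding \<gamma>_def \<delta>_def by (rule deg_int(2)[OF hd])
  have DG: "D (e (G j)) = \<epsilon> j \<cdot> e (L (j+k+1)) + \<zeta> j \<cdot> e (I (j+k+1))" for j
    unfolding \<epsilon>_def \<zeta>_def by (rule deg_half(1)[OF hd])
  have DH: "D (e (H j)) = \<eta> j \<cdot> e (L (j+k+1)) + \<theta> j \<cdot> e (I (j+k+1))" for j
    unfolding \<eta>_def \<theta>_def by (rule deg_half(2)[OF hd])
  note simps = DL DI DG DH D_sc[OF osd] D_add[OF osd] brk_add_left brk_add_right brk_sc_left brk_sc_right
  have rnz: "(of_int k + 1/2 :: complex) \<noteq> 0" by (rule r_nz)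
  have A: "\<eta> j = 0 \<and> \<theta> j = 0" for j
  proof -
    note R = der_basis[OF osd, of "L 0" "H j"]
    have E1: "(- of_int j - 1/2) * \<eta> j = - of_int (j+k+1) * \<eta> j"
      using fun_cong[OF R, of "L (j+k+1)"] by (simp add: simps)
    have E2: "(- of_int j - 1/2) * \<theta> j = - of_int (j+k+1) * \<theta> j"
      using fun_cong[OF R, of "I (j+k+1)"] by (simp add: simps)
    have "(of_int k + 1/2) * \<eta> j = (- of_int j - 1/2) * \<eta> j - (- of_int (j+k+1) * \<eta> j)"
      by (simp add: algebra_simps)
    then have "(of_int k + 1/2) * \<eta> j = 0" using E1 by simp
    moreover have "(of_int k + 1/2) * \<theta> j = (- of_int j - 1/2) * \<theta> j - (- of_int (j+k+1) * \<theta> j)"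
      by (simp add: algebra_simps)
    then have "(of_int k + 1/2) * \<theta> j = 0" using E2 by simp
    ultimately show ?thesis using rnz by simp
  qed
  define a where "a = \<alpha> 0 / (of_int k + 1/2)"
  have ra: "(of_int k + 1/2) * a = \<alpha> 0" unfolding a_def using rnz by simp
  have C: "\<epsilon> j = 0 \<and> \<zeta> j = a" for j
  proof -
    note R = der_basis[OF osd, of "L 0" "G j"]
    have E1: "(- of_int j - 1/2) * \<epsilon> j = - of_int (j+k+1) * \<epsilon> j"
      using fun_cong[OF R, of "L (j+k+1)"] by (simp add: simps A)
    have E2: "(- of_int j - 1/2) * \<zeta> j = \<alpha> 0 + \<zeta> j * (- of_int j - of_int k - 1)"
      using fun_cong[OF R, of "I (j+k+1)"] by (simp add: simps A)
    have "(of_int k + 1/2) * \<epsilon> j = (- of_int j - 1/2) * \<epsilon> j - (- of_int (j+k+1) * \<epsilon> j)"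
      by (simp add: algebra_simps)
    then have "(of_int k + 1/2) * \<epsilon> j = 0" using E1 by simp
    moreover have "(of_int k + 1/2) * \<zeta> j = (- of_int j - 1/2) * \<zeta> j - \<zeta> j * (- of_int j - of_int k - 1)"
      by (simp add: algebra_simps)
    then have "(of_int k + 1/2) * \<zeta> j = (of_int k + 1/2) * a" using E2 ra by simp
    ultimately show ?thesis using rnz by simp
  qed
  have Dm: "\<alpha> m = a * (of_int k + 1/2 - of_int m / 2)" for m
  proof -
    note R = der_basis[OF osd, of "L m" "G 0"]
    have E: "(of_int m/2 - 1/2) * a = \<alpha> m + (of_int m - of_int k - 1) * a"
      using fun_cong[OF R, of "I (m+k+1)"] by (simp add: simps A C)
    have "\<alpha> m = (of_int m/2 - 1/2) * a - (of_int m - of_int k - 1) * a" using E by simp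
    also have "\<dots> = a * (of_int k + 1/2 - of_int m / 2)" by (simp add: algebra_simps)
    finally show ?thesis .
  qed
  have Em: "\<gamma> n = 0 \<and> \<delta> n = a * (2 * of_int k + 1 - of_int n)" for n
  proof -
    note R = der_basis[OF osd, of "G 0" "G (n-1)"]
    have E1: "\<gamma> n = 0"
      using fun_cong[OF R, of "G (n+k)"] by (simp add: simps A C)
    have E2: "\<delta> n = a * (2 * of_int k + 1 - of_int n)"
      using fun_cong[OF R, of "H (n+k)"] by (simp add: simps A C, simp add: algebra_simps)
    show ?thesis using E1 E2 by simp
  qed
  define b where "b = (\<beta> 0 + a * lam) / (of_int k + 1/2)"
  have rb: "\<beta> 0 = (of_int k + 1/2) * b - a * lam" unfolding b_def using rnz by simp
  have Fm: "\<beta> m = - (a * lam * (of_int m + 1) + b * (of_int m / 2 - of_int k - 1/2))" for m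
  proof -
    note R = der_basis[OF osd, of "L m" "L 0"]
    have E: "of_int m * \<beta> m =
      \<beta> m * (1 / 2 - (- of_int m - of_int k)) - \<alpha> m * lam +
     (\<alpha> 0 * (lam * (of_int m + 1)) + \<beta> 0 * (of_int m / 2 - of_int k - 1 / 2))"
      using fun_cong[OF R, of "H (m+k)"] by (simp add: simps A C)
    have "(of_int k + 1/2) * \<beta> m = \<beta> m * (1 / 2 - (- of_int m - of_int k)) - of_int m * \<beta> m"
      by (simp add: algebra_simps)
    also have "\<dots> = \<alpha> m * lam - (\<alpha> 0 * (lam * (of_int m + 1)) + \<beta> 0 * (of_int m / 2 - of_int k - 1 / 2))"
      unfolding E by (simp add: algebra_simps)
    also have "\<dots> = (of_int k + 1/2) * (- (a * lam * (of_int m + 1) + b * (of_int m / 2 - of_int k - 1/2)))"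
      unfolding Dm rb by (simp add: algebra_simps)
    finally show ?thesis using rnz by simp
  qed
  define z where "z = a \<cdot> e (G k) + b \<cdot> e (H k)"
  have Zl: "z \<in> Lspace" unfolding z_def by simp
  have base: "D (e c) = brk lam z (e c)" for c
  proof (cases c)
    case (L m) then show ?thesis unfolding z_def
      by (intro ext) (auto simp: simps Dm Fm algebra_simps)
  next
    case (I m) then show ?thesis unfolding z_def
      by (intro ext) (auto simp: simps Em algebra_simps)
  next
    case (G j) then show ?thesis unfolding z_def
      by (intro ext) (auto simp: simps C algebra_simps)
  next
    case (H j) then show ?thesis unfolding z_def
      by (intro ext) (auto simp: simps A algebra_simps)
  qed
  have "\<forall>x\<in>Lspace. D x = brk lam z x"
  proof
    fix x assume x: "x \<in> Lspace"
    then have f: "finite (supp x)" by (simp add: Lspace_def)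
    have "D x = D (\<Sum>c\<in>supp x. x c \<cdot> e c)" using repr[OF x] by simp
    also have "\<dots> = (\<Sum>c\<in>supp x. x c \<cdot> D (e c))"
      by (rule lin_sum[OF D_add[OF osd] D_sc[OF osd] f])
    also have "\<dots> = (\<Sum>c\<in>supp x. x c \<cdot> brk lam z (e c))" by (simp add: base)
    also have "\<dots> = brk lam z (\<Sum>c\<in>supp x. x c \<cdot> e c)"
      by (rule lin_sum[OF brk_add_right[OF _ _ Zl] brk_sc_right[OF _ Zl] f, symmetric])
    also have "\<dots> = brk lam z x" using repr[OF x] by simp
    finally show "D x = brk lam z x" .
  qed
  then show ?thesis unfolding z_def by blast
qed

end
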